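(* For $k\ge4$ let $\iota_k=\lfloor k^{1/3}\rfloor$ and $$A(k)=\sum_{j=4}^{k-\iota_k-1}j\,s_j\,\tilde\tau_k^{\,j-1}.$$ Then $A(k)=\mathcal{O}(k^{-3})$ as $k\to\infty$.
   Context: Let $s_j$ be the number of simple permutations of size $j$. A permutation is simple if its only intervals (factors whose value set is a set of consecutive integers) are the singletons and the whole permutation, with the convention that the permutations of sizes $1$ and $2$ are not simple. For $k\ge4$, let $$\Lambda_k(x)=\frac{x^2}{1-x}+\sum_{j=4}^k s_j\left(\frac{x}{1-x}\right)^j\qquad(0\le x<1).$$ Let $\tau_k$ be the unique solution in $(0,1)$ of $\Lambda_k'(x)=1$, and set $$\tilde\tau_k=\frac{\tau_k}{1-\tau_k}.$$ *)

theory Defs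
  imports "HOL-Analysis.Analysis" "HOL-Library.Landau_Symbols"
begin

definition is_perm :: "nat \<Rightarrow> nat list \<Rightarrow> bool" where
  "is_perm n p \<longleftrightarrow> distinct p \<and> set p = {0..<n}"

definition consecutive_set :: "nat set \<Rightarrow> bool" where
  "consecutive_set S \<longleftrightarrow> (\<exists>a b. S = {a..b})"

definition factor :: "nat list \<Rightarrow> nat \<Rightarrow> nat \<Rightarrow> nat list" where
  "factor p i j = take (j - i + 1) (drop i p)"

definition is_interval :: "nat list \<Rightarrow> nat \<Rightarrow> nat \<Rightarrow> bool" where
  "is_interval p i j \<longleftrightarrow> i \<le> j \<and> j < length p \<and> consecutive_set (set (factor p i j))"

text \<open>Simple: only trivial intervals; sizes 1 and 2 (and 0) excluded by convention.\<close>
definition simple_perm :: "nat list \<Rightarrow> bool" where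
  "simple_perm p \<longleftrightarrow> length p \<ge> 3 \<and>
     (\<forall>i j. is_interval p i j \<longrightarrow> i = j \<or> (i = 0 \<and> j = length p - 1))"

definition num_simple :: "nat \<Rightarrow> nat" where
  "num_simple j = card {p. is_perm j p \<and> simple_perm p}"

definition Lambda :: "nat \<Rightarrow> real \<Rightarrow> real" where
  "Lambda k x = x^2 / (1 - x) + (\<Sum>j=4..k. real (num_simple j) * (x / (1 - x))^j)"

definition tau :: "nat \<Rightarrow> real" where
  "tau k = (THE x. 0 < x \<and> x < 1 \<and> deriv (Lambda k) x = 1)"

definition tau_tilde :: "nat \<Rightarrow> real" where
  "tau_tilde k = tau k / (1 - tau k)"

definition iota :: "nat \<Rightarrow> nat" where
  "iota k = nat \<lfloor>root 3 (real k)\<rfloor>"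

definition A :: "nat \<Rightarrow> real" where
  "A k = (\<Sum>j=4..k - iota k - 1. real j * real (num_simple j) * tau_tilde k ^ (j - 1))"

end

theory Submission
  imports Defs "HOL-Combinatorics.Multiset_Permutations" "HOL-Real_Asymp.Real_Asymp"
begin


lemma set_factor:
  assumes "a \<le> b" "b < length p"
  shows "set (factor p a b) = (\<lambda>t. p ! t) ` {a..b}"
proof -
  have "set (factor p a b) = {factor p a b ! t | t. t < length (factor p a b)}"
    by (rule set_conv_nth)
  also have "length (factor p a b) = b - a + 1" using assms by (simp add: factor_def)
  also have "{factor p a b ! t | t. t < b - a + 1} = {p ! (a + t) | t. t < b - a + 1}"
  proof -
    have "\<And>t. t < b - a + 1 \<Longrightarrow> factor p a b ! t = p ! (a + t)"
      using assms by (simp add: factor_def)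
    then show ?thesis by (metis (no_types, lifting))
  qed
  also have "\<dots> = (\<lambda>t. p ! t) ` {a..b}"
  proof (intro set_eqI iffI)
    fix x assume "x \<in> {p ! (a + t) | t. t < b - a + 1}"
    then obtain t where "t < b - a + 1" "x = p ! (a+t)" by auto
    then show "x \<in> (\<lambda>t. p ! t) ` {a..b}" using assms by (intro image_eqI[of _ _ "a+t"]) auto
  next
    fix x assume "x \<in> (\<lambda>t. p ! t) ` {a..b}"
    then obtain t where "t \<in> {a..b}" "x = p ! t" by auto
    then show "x \<in> {p ! (a + t) | t. t < b - a + 1}" using assms
      by (intro CollectI exI[of _ "t - a"]) auto
  qed
  finally show ?thesis .
qed

lemma is_interval_alt:
  "is_interval p a b \<longleftrightarrow> a \<le> b \<and> b < length p \<and> consecutive_set ((\<lambda>t. p ! t) ` {a..b})"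
  unfolding is_interval_def using set_factor by auto

lemma consecutive_betw:
  assumes "consecutive_set S" "x \<in> S" "z \<in> S" "x \<le> y" "y \<le> z"
  shows "y \<in> S"
  using assms unfolding consecutive_set_def by auto

lemma is_perm_iff: "is_perm n p \<longleftrightarrow> p \<in> permutations_of_set {0..<n}"
  unfolding is_perm_def permutations_of_set_def by auto

lemma finite_simple: "finite {p. is_perm n p \<and> simple_perm p}"
  by (rule finite_subset[of _ "permutations_of_set {0..<n}"]) (auto simp: is_perm_iff)

lemma num_simple_le_fact: "num_simple n \<le> fact n"
proof -
  have "num_simple n \<le> card (permutations_of_set {0..<n})"
    unfolding num_simple_def by (rule card_mono) (auto simp: is_perm_iff)
  then show ?thesis by simp
qed

lemma simple_4: "simple_perm [1,3,0,2]"
  unfolding simple_perm_def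
proof (intro conjI allI impI)
  let ?p = "[1::nat,3,0,2]"
  fix i j assume "is_interval ?p i j"
  then have ij: "i \<le> j" "j < 4" and c: "consecutive_set ((\<lambda>t. ?p ! t) ` {i..j})"
    by (auto simp: is_interval_alt)
  have gap: "\<exists>t. i \<le> t \<and> t \<le> j \<and> ?p ! t = v"
    if "i \<le> t1" "t1 \<le> j" "i \<le> t2" "t2 \<le> j" "?p ! t1 \<le> v" "v \<le> ?p ! t2" for t1 t2 v
  proof -
    have "v \<in> (\<lambda>t. ?p ! t) ` {i..j}"
      using consecutive_betw[OF c, of "?p ! t1" "?p ! t2" v] that by auto
    then show ?thesis by auto
  qed
  have four: "t < 4 \<Longrightarrow> t = 0 \<or> t = 1 \<or> t = 2 \<or> t = 3" for t :: nat by linarith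
  have "i < 4" using ij by simp
  show "i = j \<or> i = 0 \<and> j = length ?p - 1"
  proof (rule ccontr)
    assume H: "\<not> (i = j \<or> i = 0 \<and> j = length ?p - 1)"
    then have cases: "(i = 0 \<and> j = 1) \<or> (i = 0 \<and> j = 2) \<or> (i = 1 \<and> j = 2) \<or> (i = 1 \<and> j = 3) \<or> (i = 2 \<and> j = 3)"
      using ij by auto
    then show False
    proof (elim disjE conjE)
      assume "i = 0" "j = 1"
      with gap[of 0 1 2] obtain t where "t \<le> 1" "?p ! t = 2" by auto
      then show False using four[of t] by auto
    next
      assume "i = 0" "j = 2"
      with gap[of 0 1 2] obtain t where "t \<le> 2" "?p ! t = 2" by auto
      then show False using four[of t] by auto
    next
      assume "i = 1" "j = 2"
      with gap[of 2 1 1] obtain t where "1 \<le> t" "t \<le> 2" "?p ! t = 1" by auto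
      then show False using four[of t] by auto
    next
      assume "i = 1" "j = 3"
      with gap[of 2 3 1] obtain t where "1 \<le> t" "t \<le> 3" "?p ! t = 1" by auto
      then show False using four[of t] by auto
    next
      assume "i = 2" "j = 3"
      with gap[of 2 3 1] obtain t where "2 \<le> t" "t \<le> 3" "?p ! t = 1" by auto
      then show False using four[of t] by auto
    qed
  qed
qed auto



definition ins :: "nat \<Rightarrow> nat list \<Rightarrow> nat \<Rightarrow> nat list" where
  "ins n p i = take i p @ n # drop i p"

lemma ins_length: "i \<le> length p \<Longrightarrow> length (ins n p i) = Suc (length p)"
  by (simp add: ins_def)

lemma ins_nth_less: "t < i \<Longrightarrow> i \<le> length p \<Longrightarrow> ins n p i ! t = p ! t"
  by (simp add: ins_def nth_append)

lemma ins_nth_eq: "i \<le> length p \<Longrightarrow> ins n p i ! i = n"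
  by (simp add: ins_def nth_append)

lemma ins_nth_gr: "i < t \<Longrightarrow> i \<le> length p \<Longrightarrow> t \<le> length p \<Longrightarrow> ins n p i ! t = p ! (t - 1)"
proof -
  assume a: "i < t" "i \<le> length p" "t \<le> length p"
  have "ins n p i ! t = (n # drop i p) ! (t - i)" using a by (simp add: ins_def nth_append)
  also have "\<dots> = drop i p ! (t - i - 1)" using a by (simp add: nth_Cons')
  also have "\<dots> = p ! (t - 1)" using a by (simp add: nth_drop)
  finally show ?thesis .
qed

lemma perm_nth_less: "is_perm n p \<Longrightarrow> t < n \<Longrightarrow> p ! t < n"
  unfolding is_perm_def by (metis atLeastLessThan_iff distinct_card card_atLeastLessThan
     diff_zero nth_mem)

lemma perm_length: "is_perm n p \<Longrightarrow> length p = n"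
  unfolding is_perm_def by (metis distinct_card card_atLeastLessThan diff_zero)

lemma ins_perm:
  assumes "is_perm n p" "i \<le> n"
  shows "is_perm (Suc n) (ins n p i)"
proof -
  have d: "distinct p" and s: "set p = {0..<n}" using assms unfolding is_perm_def by auto
  have "distinct (take i p @ drop i p)" using d by simp
  moreover have "n \<notin> set p" using s by auto
  moreover have "set (take i p) \<inter> set (drop i p) = {}" using d
    by (metis append_take_drop_id distinct_append)
  ultimately have "distinct (ins n p i)" unfolding ins_def
    by (auto dest: in_set_takeD in_set_dropD)
  moreover have "set (ins n p i) = insert n (set p)"
    unfolding ins_def by (metis Un_insert_right append_take_drop_id list.simps(15) set_append)
  ultimately show ?thesis using s unfolding is_perm_def by auto
qed

lemma image_ins_mid:
  assumes "a \<le> i" "i \<le> b" "a < b" "b \<le> length p"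
  shows "(\<lambda>t. ins n p i ! t) ` {a..b} = insert n ((\<lambda>t. p ! t) ` {a..b-1})"
proof (intro set_eqI iffI)
  fix x assume "x \<in> (\<lambda>t. ins n p i ! t) ` {a..b}"
  then obtain t where t: "a \<le> t" "t \<le> b" "x = ins n p i ! t" by auto
  show "x \<in> insert n ((\<lambda>t. p ! t) ` {a..b-1})"
  proof (cases t i rule: linorder_cases)
    case less then show ?thesis using t assms by (auto simp: ins_nth_less)
  next
    case equal then show ?thesis using t assms by (auto simp: ins_nth_eq)
  next
    case greater then show ?thesis using t assms
      by (intro insertI2 image_eqI[of _ _ "t - 1"]) (auto simp: ins_nth_gr)
  qed
next
  fix x assume "x \<in> insert n ((\<lambda>t. p ! t) ` {a..b-1})"
  then consider "x = n" | t where "a \<le> t" "t \<le> b - 1" "x = p ! t" by auto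
  then show "x \<in> (\<lambda>t. ins n p i ! t) ` {a..b}"
  proof cases
    case 1 then show ?thesis using assms by (intro image_eqI[of _ _ i]) (auto simp: ins_nth_eq)
  next
    case 2
    show ?thesis
    proof (cases "t < i")
      case True then show ?thesis using 2 assms by (intro image_eqI[of _ _ t]) (auto simp: ins_nth_less)
    next
      case False then show ?thesis using 2 assms
        by (intro image_eqI[of _ _ "t + 1"]) (auto simp: ins_nth_gr)
    qed
  qed
qed

lemma ins_simple:
  assumes perm: "is_perm n p" and sp: "simple_perm p" and i: "1 \<le> i" "i \<le> n - 1"
    and ne1: "p ! (i - 1) \<noteq> n - 1" and ne2: "p ! i \<noteq> n - 1"
  shows "simple_perm (ins n p i)"
proof -
  have lp: "length p = n" using perm by (rule perm_length)
  have n3: "n \<ge> 3" using sp lp by (simp add: simple_perm_def)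
  have lq: "length (ins n p i) = Suc n" using i lp by (simp add: ins_length)
  have simp_p: "\<And>a b. is_interval p a b \<Longrightarrow> a = b \<or> (a = 0 \<and> b = n - 1)"
    using sp lp unfolding simple_perm_def by auto
  show ?thesis unfolding simple_perm_def
  proof (intro conjI allI impI)
    show "3 \<le> length (ins n p i)" using lq n3 by simp
    fix a b assume iv: "is_interval (ins n p i) a b"
    then have ab: "a \<le> b" "b \<le> n" and c: "consecutive_set ((\<lambda>t. ins n p i ! t) ` {a..b})"
      using lq by (auto simp: is_interval_alt)
    show "a = b \<or> a = 0 \<and> b = length (ins n p i) - 1"
    proof (rule ccontr)
      assume H: "\<not> (a = b \<or> a = 0 \<and> b = length (ins n p i) - 1)"
      then have ab': "a < b" using ab by auto
      consider "b < i" | "i < a" | "a \<le> i" "i \<le> b" by linarith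
      then show False
      proof cases
        case 1
        have "(\<lambda>t. ins n p i ! t) ` {a..b} = (\<lambda>t. p ! t) ` {a..b}"
          using 1 i lp by (intro image_cong) (auto simp: ins_nth_less)
        then have "is_interval p a b" using c ab 1 i lp by (auto simp: is_interval_alt)
        then show False using simp_p ab' 1 i by fastforce
      next
        case 2
        have "(\<lambda>t. ins n p i ! t) ` {a..b} = (\<lambda>t. p ! (t - 1)) ` {a..b}"
          using 2 i ab lp by (intro image_cong) (auto simp: ins_nth_gr)
        also have "\<dots> = (\<lambda>t. p ! t) ` ((\<lambda>t. t - 1) ` {a..b})" by (simp add: image_image)
        also have "(\<lambda>t. t - 1) ` {a..b} = {a-1..b-1}"
        proof (intro set_eqI iffI)
          fix x assume "x \<in> {a-1..b-1}" then show "x \<in> (\<lambda>t. t - 1) ` {a..b}"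
            using 2 ab' by (intro image_eqI[of _ _ "x+1"]) auto
        qed auto
        finally have "is_interval p (a-1) (b-1)" using c ab 2 i lp by (auto simp: is_interval_alt)
        then show False using simp_p ab' 2 i by fastforce
      next
        case 3
        have eq: "(\<lambda>t. ins n p i ! t) ` {a..b} = insert n ((\<lambda>t. p ! t) ` {a..b-1})"
          using 3 ab' ab lp by (intro image_ins_mid) auto
        obtain c0 d0 where cd: "(\<lambda>t. ins n p i ! t) ` {a..b} = {c0..d0}"
          using c unfolding consecutive_set_def by auto
        have lessn: "\<And>t. t \<le> b - 1 \<Longrightarrow> p ! t < n" using perm ab ab'
          by (intro perm_nth_less) auto
        have nin: "n \<in> {c0..d0}" using eq cd by auto
        have "d0 \<in> {c0..d0}" using nin by auto
        then have "d0 \<in> insert n ((\<lambda>t. p ! t) ` {a..b-1})" using eq cd by metis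
        then have "d0 \<le> n" using lessn by (auto simp: less_imp_le)
        then have d0: "d0 = n" using nin by auto
        have nX: "n \<notin> (\<lambda>t. p ! t) ` {a..b-1}"
        proof
          assume "n \<in> (\<lambda>t. p ! t) ` {a..b-1}"
          then obtain t where "t \<le> b - 1" "n = p ! t" by auto
          then show False using lessn[of t] by simp
        qed
        have "(\<lambda>t. p ! t) ` {a..b-1} = insert n ((\<lambda>t. p ! t) ` {a..b-1}) - {n}"
          using nX by auto
        also have "\<dots> = {c0..n} - {n}" using eq cd d0 by simp
        also have "\<dots> = {c0..n-1}" by (rule set_eqI) (use n3 in auto)
        finally have im: "(\<lambda>t. p ! t) ` {a..b-1} = {c0..n-1}" .
        then have "is_interval p a (b-1)" using ab ab' lp
          unfolding is_interval_alt consecutive_set_def by auto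
        then have "a = b - 1 \<or> (a = 0 \<and> b - 1 = n - 1)" by (rule simp_p)
        then show False
        proof
          assume ab1: "a = b - 1"
          then have "(\<lambda>t. p ! t) ` {a..b-1} = {p ! a}" by simp
          then have e: "{p ! a} = {c0..n-1}" using im by metis
          have "p ! a \<in> {c0..n-1}" using e by blast
          then have "n - 1 \<in> {c0..n-1}" by auto
          then have "n - 1 \<in> {p ! a}" using e by blast
          then have pa: "p ! a = n - 1" by simp
          have "i = a \<or> i = Suc a" using ab1 3 ab' by arith
          then show False
          proof
            assume "i = a" then show False using pa ne2 by simp
          next
            assume "i = Suc a" then show False using pa ne1 by simp
          qed
        next
          assume "a = 0 \<and> b - 1 = n - 1"
          then show False using H lq ab n3 by auto
        qed
      qed
    qed
  qed
qed



lemma ins_inj: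
  assumes "is_perm n p" "is_perm n p'" "i < n" "i' < n"
    and eq: "ins n p i = ins n p' i'"
  shows "p = p' \<and> i = i'"
proof -
  have lp: "length p = n" "length p' = n" using assms perm_length by auto
  have nn: "n \<notin> set p" "n \<notin> set p'" using assms(1,2) unfolding is_perm_def by auto
  have "i = i'"
  proof (rule ccontr)
    assume "i \<noteq> i'"
    then consider "i < i'" | "i' < i" by linarith
    then show False
    proof cases
      case 1
      have "ins n p i ! i = n" using lp assms(3) by (intro ins_nth_eq) simp
      moreover have "ins n p' i' ! i = p' ! i" using 1 lp assms(4) by (intro ins_nth_less) simp_all
      ultimately show False using eq nn lp 1 assms by (metis nth_mem order.strict_trans)
    next
      case 2
      have "ins n p' i' ! i' = n" using lp assms(4) by (intro ins_nth_eq) simp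
      moreover have "ins n p i ! i' = p ! i'" using 2 lp assms(3) by (intro ins_nth_less) simp_all
      ultimately show False using eq nn lp 2 assms by (metis nth_mem order.strict_trans)
    qed
  qed
  have rec: "take j (ins n q j) @ drop (Suc j) (ins n q j) = q" if "j \<le> length q" for q j
    using that by (simp add: ins_def)
  have e1: "take i (ins n p i) @ drop (Suc i) (ins n p i) = p" using rec[of i p] lp assms(3) by simp
  have e2: "take i' (ins n p' i') @ drop (Suc i') (ins n p' i') = p'"
    using rec[of i' p'] lp assms(4) by simp
  have e1': "take i (ins n p' i') @ drop (Suc i) (ins n p' i') = p" using e1 by (simp only: eq)
  have "p = take i (ins n p' i') @ drop (Suc i) (ins n p' i')" using e1' by (rule sym)
  also have "\<dots> = p'" unfolding \<open>i = i'\<close> by (rule e2)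
  finally show ?thesis using \<open>i = i'\<close> by simp
qed

definition goodpos :: "nat \<Rightarrow> nat list \<Rightarrow> nat set" where
  "goodpos n p = {i. 1 \<le> i \<and> i \<le> n - 1 \<and> p ! (i - 1) \<noteq> n - 1 \<and> p ! i \<noteq> n - 1}"

lemma card_goodpos:
  assumes "is_perm n p" "n \<ge> 1"
  shows "n - 3 \<le> card (goodpos n p)"
proof -
  have d: "distinct p" and s: "set p = {0..<n}" and lp: "length p = n"
    using assms perm_length unfolding is_perm_def by auto
  have "n - 1 \<in> set p" using s assms by auto
  then obtain r where r: "r < n" "p ! r = n - 1" using lp by (metis in_set_conv_nth)
  have sub: "{1..n-1} - {r, Suc r} \<subseteq> goodpos n p"
  proof
    fix i assume i: "i \<in> {1..n-1} - {r, Suc r}"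
    have iln: "i < n" "i - 1 < n" using i by auto
    have "p ! (i - 1) \<noteq> n - 1"
    proof
      assume "p ! (i - 1) = n - 1"
      then have "i - 1 = r" using r d lp iln nth_eq_iff_index_eq[of p "i-1" r] by auto
      then show False using i by auto
    qed
    moreover have "p ! i \<noteq> n - 1"
    proof
      assume "p ! i = n - 1"
      then have "i = r" using r d lp iln nth_eq_iff_index_eq[of p i r] by auto
      then show False using i by auto
    qed
    ultimately show "i \<in> goodpos n p" using i unfolding goodpos_def by auto
  qed
  have fin: "finite (goodpos n p)" unfolding goodpos_def by (rule finite_subset[of _ "{..n}"]) auto
  have "n - 3 \<le> card {1..n-1} - card {r, Suc r}" by (simp add: card_insert_if)
  also have "\<dots> \<le> card ({1..n-1} - {r, Suc r})" by (rule diff_card_le_card_Diff) auto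
  also have "\<dots> \<le> card (goodpos n p)" by (rule card_mono[OF fin sub])
  finally show ?thesis .
qed

lemma num_simple_step:
  assumes "n \<ge> 4"
  shows "(n - 3) * num_simple n \<le> num_simple (Suc n)"
proof -
  let ?S = "{p. is_perm n p \<and> simple_perm p}"
  let ?T = "{p. is_perm (Suc n) p \<and> simple_perm p}"
  let ?D = "Sigma ?S (goodpos n)"
  have finS: "finite ?S" by (rule finite_simple)
  have fing: "finite (goodpos n p)" for p unfolding goodpos_def by (rule finite_subset[of _ "{..n}"]) auto
  have "(n - 3) * num_simple n = (\<Sum>p\<in>?S. n - 3)" unfolding num_simple_def by simp
  also have "\<dots> \<le> (\<Sum>p\<in>?S. card (goodpos n p))"
    using assms by (intro sum_mono card_goodpos) auto
  also have "\<dots> = card ?D" using finS fing by (simp add: card_SigmaI)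
  also have "\<dots> \<le> card ?T"
  proof (rule card_inj_on_le[of "\<lambda>(p, i). ins n p i"])
    show "inj_on (\<lambda>(p, i). ins n p i) ?D"
    proof (rule inj_onI)
      fix x x' assume x: "x \<in> ?D" and x': "x' \<in> ?D"
        and e: "(\<lambda>(p, i). ins n p i) x = (\<lambda>(p, i). ins n p i) x'"
      obtain p i where pi: "x = (p, i)" by (cases x)
      obtain p' i' where pi': "x' = (p', i')" by (cases x')
      have px: "is_perm n p" "i \<le> n - 1" using x unfolding pi by (auto simp: goodpos_def)
      have px': "is_perm n p'" "i' \<le> n - 1" using x' unfolding pi' by (auto simp: goodpos_def)
      have ee: "ins n p i = ins n p' i'" using e unfolding pi pi' by simp
      have "i < n" "i' < n" using px(2) px'(2) assms by linarith+
      then have "p = p' \<and> i = i'" using ins_inj[OF px(1) px'(1) _ _ ee] by blast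
      then show "x = x'" using pi pi' by simp
    qed
    show "(\<lambda>(p, i). ins n p i) ` ?D \<subseteq> ?T"
    proof (rule subsetI)
      fix x assume "x \<in> (\<lambda>(p, i). ins n p i) ` ?D"
      then obtain z where z: "z \<in> ?D" "x = (\<lambda>(p, i). ins n p i) z" by (rule imageE)
      obtain p i where zpi: "z = (p, i)" by (cases z)
      have pS: "p \<in> ?S \<and> i \<in> goodpos n p" using z(1) unfolding zpi mem_Sigma_iff .
      have px: "x = ins n p i" using z(2) unfolding zpi prod.case .
      have gp: "is_perm n p \<and> simple_perm p" using conjunct1[OF pS] unfolding mem_Collect_eq .
      have gi: "1 \<le> i \<and> i \<le> n - 1 \<and> p ! (i - 1) \<noteq> n - 1 \<and> p ! i \<noteq> n - 1"
        using conjunct2[OF pS] unfolding goodpos_def mem_Collect_eq .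
      note g = conjunct1[OF gp] conjunct2[OF gp] conjunct1[OF gi] conjunct1[OF conjunct2[OF gi]]
        conjunct1[OF conjunct2[OF conjunct2[OF gi]]] conjunct2[OF conjunct2[OF conjunct2[OF gi]]]
      have "is_perm (Suc n) (ins n p i)" using g(1,4) by (intro ins_perm) auto
      moreover have "simple_perm (ins n p i)" by (rule ins_simple[OF g])
      ultimately have "is_perm (Suc n) (ins n p i) \<and> simple_perm (ins n p i)" ..
      then show "x \<in> ?T" unfolding px mem_Collect_eq .
    qed
    show "finite ?T" by (rule finite_simple)
  qed
  finally show ?thesis unfolding num_simple_def .
qed

lemma num_simple_4: "1 \<le> num_simple 4"
proof -
  have "[1,3,0,2] \<in> {p. is_perm 4 p \<and> simple_perm p}"
    using simple_4 by (auto simp: is_perm_def)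
  then have "{p. is_perm 4 p \<and> simple_perm p} \<noteq> {}" by auto
  then show ?thesis unfolding num_simple_def using finite_simple
    by (simp add: Suc_leI card_gt_0_iff)
qed

lemma num_simple_lower: "n \<ge> 4 \<Longrightarrow> fact (n - 4) \<le> num_simple n"
proof (induction n rule: dec_induct)
  case base then show ?case using num_simple_4 by simp
next
  case (step m)
  have s4: "Suc m - 4 = Suc (m - 4)" "Suc (m - 4) = m - 3" using step(1) by auto
  have "fact (Suc m - 4) = Suc (m - 4) * fact (m - 4)" unfolding s4(1) by simp
  also have "\<dots> = (m - 3) * fact (m - 4)" unfolding s4(2) ..
  also have "\<dots> \<le> (m - 3) * num_simple m" by (intro mult_le_mono2) (rule step(3))
  also have "\<dots> \<le> num_simple (Suc m)" by (rule num_simple_step[OF step(1)])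
  finally show ?case .
qed



definition P :: "nat \<Rightarrow> real \<Rightarrow> real" where
  "P k y = (\<Sum>j=4..k. real j * real (num_simple j) * y ^ (j - 1))"

definition G :: "nat \<Rightarrow> real \<Rightarrow> real" where
  "G k y = (1 + y)^2 * (1 + P k y)"

lemma P_nonneg: "0 \<le> y \<Longrightarrow> 0 \<le> P k y"
  unfolding P_def by (intro sum_nonneg) auto

lemma P_mono: "0 \<le> y \<Longrightarrow> y \<le> y' \<Longrightarrow> P k y \<le> P k y'"
  unfolding P_def by (intro sum_mono mult_left_mono power_mono) auto

lemma G_strict: "0 \<le> y \<Longrightarrow> y < y' \<Longrightarrow> G k y < G k y'"
proof -
  assume a: "0 \<le> y" "y < y'"
  have sq: "(1 + y)^2 < (1 + y')^2" using a by (intro power_strict_mono) auto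
  have le: "1 + P k y \<le> 1 + P k y'" using a P_mono[of y y' k] by auto
  have pos: "0 < 1 + P k y" using P_nonneg[of y k] a by auto
  have "(1 + y)^2 * (1 + P k y) < (1 + y')^2 * (1 + P k y)"
    by (rule mult_strict_right_mono[OF sq pos])
  also have "\<dots> \<le> (1 + y')^2 * (1 + P k y')"
    by (rule mult_left_mono[OF le]) simp
  finally show ?thesis unfolding G_def .
qed

lemma alg_aux: "(c::real) - 1 + (\<Sum>j\<in>S. f j * c) = c * (1 + sum f S) - 1"
proof -
  have "(\<Sum>j\<in>S. f j * c) = sum f S * c" by (rule sum_distrib_right[symmetric])
  then show ?thesis by (simp add: algebra_simps)
qed

lemma G_cont: "continuous_on S (G k)"
  unfolding G_def P_def by (intro continuous_intros)

lemma deriv_Lambda: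
  assumes x: "x < 1"
  shows "(Lambda k has_real_derivative (G k (x / (1 - x)) - 1)) (at x)"
proof -
  have nz: "1 - x \<noteq> 0" using x by simp
  have d0: "((\<lambda>x. x / (1 - x)) has_real_derivative 1 / (1 - x)^2) (at x)"
    by (rule DERIV_cong[OF DERIV_divide[OF DERIV_ident DERIV_diff[OF DERIV_const DERIV_ident]]])
       (use nz in \<open>simp_all add: power2_eq_square\<close>)
  have d1: "((\<lambda>x. x^2 / (1 - x)) has_real_derivative (1 / (1 - x))^2 - 1) (at x)"
  proof -
    have d: "(1 - x) * (1 - x) \<noteq> 0" using nz by simp
    have "(1 / (1 - x))^2 - 1 = (1 - (1 - x) * (1 - x)) / ((1 - x) * (1 - x))"
      using d by (simp add: power2_eq_square diff_divide_distrib)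
    also have "1 - (1 - x) * (1 - x) = 2 * x * (1 - x) + x * x"
      by (simp add: algebra_simps)
    finally have eq: "(1 / (1 - x))^2 - 1 = (2 * x * (1 - x) + x * x) / ((1 - x) * (1 - x))" .
    show ?thesis
      apply (rule DERIV_cong[OF DERIV_divide[OF DERIV_pow DERIV_diff[OF DERIV_const DERIV_ident]]])
      using nz eq by (auto simp: power2_eq_square)
  qed
  have d2: "((\<lambda>x. real (num_simple j) * (x / (1 - x))^j) has_real_derivative
       real j * real (num_simple j) * (x / (1 - x))^(j - 1) * (1 / (1 - x))^2) (at x)" for j
  proof -
    have "((\<lambda>x. (x / (1 - x))^j) has_real_derivative
       of_nat j * (1 / (1 - x)^2 * (x / (1 - x))^(j - Suc 0))) (at x)"
      by (rule DERIV_power[OF d0])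
    then have "((\<lambda>x. real (num_simple j) * (x / (1 - x))^j) has_real_derivative
       real (num_simple j) * (of_nat j * (1 / (1 - x)^2 * (x / (1 - x))^(j - Suc 0)))) (at x)"
      by (rule DERIV_cmult)
    then show ?thesis by (rule DERIV_cong) (simp add: power_one_over)
  qed
  have D: "(Lambda k has_real_derivative ((1 / (1 - x))^2 - 1) +
      (\<Sum>j=4..k. real j * real (num_simple j) * (x / (1 - x))^(j - 1) * (1 / (1 - x))^2)) (at x)"
    unfolding Lambda_def[abs_def]
    by (intro DERIV_add d1 DERIV_sum d2)
  moreover have E: "((1 / (1 - x))^2 - 1) +
      (\<Sum>j=4..k. real j * real (num_simple j) * (x / (1 - x))^(j - 1) * (1 / (1 - x))^2)
      = G k (x / (1 - x)) - 1"
  proof -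
    have "1 + x / (1 - x) = 1 / (1 - x)" using nz by (simp add: field_simps)
    then show ?thesis unfolding G_def P_def using alg_aux by simp
  qed
  ultimately show ?thesis by (rule DERIV_cong)
qed

lemma tau_char:
  shows "0 < tau_tilde k \<and> G k (tau_tilde k) = 2"
proof -
  have P0: "P k 0 = 0" unfolding P_def by (intro sum.neutral) (auto simp: power_0_left)
  have G0: "G k 0 = 1" unfolding G_def P0 by simp
  have G1: "2 \<le> G k 1" unfolding G_def using P_nonneg[of 1 k] by simp
  obtain y0 where y0: "0 \<le> y0" "y0 \<le> 1" "G k y0 = 2"
    using IVT'[of "G k" 0 2 1, OF _ G1 _ G_cont] G0 by auto
  have y0pos: "0 < y0" using y0 G0 by (cases "y0 = 0") auto
  define x0 where "x0 = y0 / (1 + y0)"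
  have x0: "0 < x0" "x0 < 1" using y0pos unfolding x0_def by (auto simp: field_simps)
  have x0y: "x0 / (1 - x0) = y0" using y0pos unfolding x0_def by (simp add: field_simps)
  have inj: "y = y0" if "0 \<le> y" "G k y = 2" for y
  proof (cases y y0 rule: linorder_cases)
    case less then show ?thesis using G_strict[of y y0 k] that y0 by auto
  next
    case greater then show ?thesis using G_strict[of y0 y k] that y0 by auto
  qed auto
  have "tau k = x0" unfolding tau_def
  proof (rule the_equality)
    have "deriv (Lambda k) x0 = G k (x0 / (1 - x0)) - 1"
      by (rule DERIV_imp_deriv[OF deriv_Lambda]) (use x0 in simp)
    then show "0 < x0 \<and> x0 < 1 \<and> deriv (Lambda k) x0 = 1"
      using x0 x0y y0(3) by simp
  next
    fix x assume a: "0 < x \<and> x < 1 \<and> deriv (Lambda k) x = 1"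
    have "deriv (Lambda k) x = G k (x / (1 - x)) - 1"
      by (rule DERIV_imp_deriv[OF deriv_Lambda]) (use a in simp)
    then have "G k (x / (1 - x)) = 2" using a by simp
    then have e: "x / (1 - x) = y0" using a by (intro inj) auto
    have "x = y0 * (1 - x)" using e a by (simp add: field_simps)
    then have "x * (1 + y0) = y0" by (simp add: algebra_simps)
    then show "x = x0" using y0pos unfolding x0_def by (simp add: field_simps)
  qed
  then have "tau_tilde k = y0" unfolding tau_tilde_def using x0y by simp
  then show ?thesis using y0pos y0 by simp
qed



lemma e_bounds: "(27/10) \<le> exp (1::real)" "exp (1::real) \<le> (68/25)"
  using e_approx_32 unfolding abs_le_iff by simp_all

lemma one_plus_pow_le_e:
  assumes "n \<ge> 1"
  shows "(1 + 1 / real n) ^ n \<le> exp 1"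
proof -
  have "(1 + 1 / real n) ^ n \<le> exp (1 / real n) ^ n"
    by (intro power_mono) (auto simp: add.commute exp_ge_add_one_self)
  also have "\<dots> = exp (real n * (1 / real n))" by (rule exp_of_nat_mult[symmetric])
  also have "\<dots> = exp 1" using assms by simp
  finally show ?thesis .
qed

lemma e_le_one_plus_pow:
  assumes "n \<ge> 1"
  shows "exp 1 \<le> (1 + 1 / real n) ^ (n + 1)"
proof -
  have n0: "real n > 0" using assms by simp
  have "ln (real n / (real n + 1)) \<le> real n / (real n + 1) - 1"
    using n0 by (intro ln_le_minus_one) auto
  also have "\<dots> = - (1 / (real n + 1))" using n0 by (simp add: field_simps)
  finally have "ln (real n / (real n + 1)) \<le> - (1 / (real n + 1))" .
  moreover have "ln (1 + 1 / real n) = - ln (real n / (real n + 1))"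
  proof -
    have "1 + 1 / real n = (real n + 1) / real n" using n0 by (simp add: field_simps)
    then show ?thesis using n0 by (simp add: ln_div)
  qed
  ultimately have l: "1 / (real n + 1) \<le> ln (1 + 1 / real n)" by simp
  have "1 = (real n + 1) * (1 / (real n + 1))" using n0 by simp
  also have "\<dots> \<le> (real n + 1) * ln (1 + 1 / real n)"
    using l n0 by (intro mult_left_mono) auto
  finally have "1 \<le> real (n + 1) * ln (1 + 1 / real n)" by (simp add: add.commute)
  then have "exp 1 \<le> exp (real (n + 1) * ln (1 + 1 / real n))" by simp
  also have "\<dots> = exp (ln (1 + 1 / real n)) ^ (n + 1)" by (rule exp_of_nat_mult)
  also have "\<dots> = (1 + 1 / real n) ^ (n + 1)" using n0 by (subst exp_ln) (auto intro: add_pos_pos)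
  finally show ?thesis .
qed

lemma fact_lower: "n \<ge> 1 \<Longrightarrow> real n ^ n \<le> exp (real n - 1) * fact n"
proof (induction n rule: dec_induct)
  case base then show ?case by simp
next
  case (step n)
  have n0: "real n > 0" using step(1) by simp
  have "real (Suc n) ^ Suc n = (real n + 1) * ((1 + 1 / real n) ^ n * real n ^ n)"
  proof -
    have "real n + 1 = (1 + 1 / real n) * real n" using n0 by (simp add: field_simps)
    then have "(real n + 1) ^ n = (1 + 1 / real n) ^ n * real n ^ n" by (metis power_mult_distrib)
    moreover have "real (Suc n) ^ Suc n = (real n + 1) * (real n + 1) ^ n"
    proof -
      have rs: "real (Suc n) = real n + 1" by simp
      show ?thesis by (simp only: rs power_Suc)
    qed
    ultimately show ?thesis by simp
  qed
  also have "\<dots> \<le> (real n + 1) * (exp 1 * (exp (real n - 1) * fact n))"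
  proof -
    have E: "(1 + 1 / real n) ^ n \<le> exp 1" using step(1) by (rule one_plus_pow_le_e)
    have S: "real n ^ n \<le> exp (real n - 1) * fact n" by (rule step(3))
    have "(1 + 1 / real n) ^ n * real n ^ n \<le> exp 1 * (exp (real n - 1) * fact n)"
      by (rule mult_mono[OF E S]) (use n0 in simp_all)
    then show ?thesis using n0 by (intro mult_left_mono) simp_all
  qed
  also have "\<dots> = exp (real (Suc n) - 1) * fact (Suc n)"
  proof -
    have "exp 1 * exp (real n - 1) = exp (real n)" by (simp add: mult_exp_exp)
    then show ?thesis by (simp add: algebra_simps)
  qed
  finally show ?case .
qed

lemma fact_upper: "n \<ge> 1 \<Longrightarrow> exp (real n - 1) * fact n \<le> real n ^ (n + 1)"
proof (induction n rule: dec_induct)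
  case base then show ?case by simp
next
  case (step n)
  have n0: "real n > 0" using step(1) by simp
  have "exp (real (Suc n) - 1) * fact (Suc n) = (real n + 1) * (exp 1 * (exp (real n - 1) * fact n))"
  proof -
    have "exp 1 * exp (real n - 1) = exp (real n)" by (simp add: mult_exp_exp)
    then show ?thesis by (simp add: algebra_simps)
  qed
  also have "\<dots> \<le> (real n + 1) * ((1 + 1 / real n) ^ (n + 1) * real n ^ (n + 1))"
  proof -
    have E: "exp 1 \<le> (1 + 1 / real n) ^ (n + 1)" using step(1) by (rule e_le_one_plus_pow)
    have S: "exp (real n - 1) * fact n \<le> real n ^ (n + 1)" by (rule step(3))
    have "exp 1 * (exp (real n - 1) * fact n) \<le> (1 + 1 / real n) ^ (n + 1) * real n ^ (n + 1)"
      by (rule mult_mono[OF E S]) (use n0 in simp_all)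
    then show ?thesis using n0 by (intro mult_left_mono) simp_all
  qed
  also have "\<dots> = real (Suc n) ^ (Suc n + 1)"
  proof -
    have "real n + 1 = (1 + 1 / real n) * real n" using n0 by (simp add: field_simps)
    then have "(real n + 1) ^ (n + 1) = (1 + 1 / real n) ^ (n + 1) * real n ^ (n + 1)"
      by (metis power_mult_distrib)
    moreover have "real (Suc n) ^ (Suc n + 1) = (real n + 1) * (real n + 1) ^ (n + 1)"
    proof -
      have rs: "real (Suc n) = real n + 1" by simp
      have "Suc n + 1 = Suc (n + 1)" by simp
      then show ?thesis by (simp only: rs power_Suc)
    qed
    ultimately show ?thesis by simp
  qed
  finally show ?case .
qed

lemma fact_le_pow_gen: "fact (m + r) \<le> real (m + r) ^ r * (fact m :: real)"
proof (induction r)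
  case 0 then show ?case by simp
next
  case (Suc r)
  have "fact (m + Suc r) = real (Suc (m + r)) * (fact (m + r) :: real)"
    by (simp only: add_Suc_right fact_Suc of_nat_mult)
  also have "\<dots> \<le> real (Suc (m + r)) * (real (m + r) ^ r * fact m)"
    using Suc by (intro mult_left_mono) auto
  also have "\<dots> \<le> real (Suc (m + r)) * (real (Suc (m + r)) ^ r * fact m)"
    by (intro mult_left_mono mult_right_mono power_mono) auto
  also have "\<dots> = real (m + Suc r) ^ Suc r * fact m" by simp
  finally show ?case .
qed

lemma fact_le_pow4: "fact (m + 4) \<le> real (m + 4) ^ 4 * (fact m :: real)"
  by (rule fact_le_pow_gen)



definition w :: "nat \<Rightarrow> real" where "w j = real j ^ 6 * (19/20) ^ (j - 4)"

definition W :: real where "W = suminf w"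

lemma w_nonneg: "0 \<le> w j" unfolding w_def by simp

lemma w_summable: "summable w"
proof -
  have "eventually (\<lambda>n::nat. (real n + 1)^6 * (19/20) \<le> (39/40) * real n ^ 6) at_top"
    by real_asymp
  then obtain N where N: "\<And>n. n \<ge> N \<Longrightarrow> (real n + 1)^6 * (19/20) \<le> (39/40) * real n ^ 6"
    unfolding eventually_at_top_linorder by blast
  show ?thesis
  proof (rule summable_ratio_test[of "39/40" "max N 4"])
    fix n assume n: "max N 4 \<le> n"
    have n4: "4 \<le> n" using n by simp
    have e: "Suc n - 4 = Suc (n - 4)" using n4 by arith
    have "norm (w (Suc n)) = ((real n + 1)^6 * (19/20)) * (19/20) ^ (n - 4)"
      unfolding w_def e by (simp add: add.commute)
    also have "\<dots> \<le> ((39/40) * real n ^ 6) * (19/20) ^ (n - 4)"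
      using N[of n] n by (intro mult_right_mono) auto
    also have "\<dots> = 39/40 * norm (w n)" unfolding w_def by simp
    finally show "norm (w (Suc n)) \<le> 39/40 * norm (w n)" .
  qed simp
qed

lemma sum_w_le: "finite S \<Longrightarrow> sum w S \<le> W"
  unfolding W_def by (rule sum_le_suminf[OF w_summable]) (auto simp: w_nonneg)

lemma W_nonneg: "0 \<le> W"
  unfolding W_def by (rule suminf_nonneg[OF w_summable w_nonneg])

lemma num_simple_le_fact_real: "real (num_simple j) \<le> fact j"
  by (metis of_nat_fact of_nat_le_iff num_simple_le_fact)

lemma exp_nat: "j \<ge> 1 \<Longrightarrow> exp (real j - 1) = exp 1 ^ (j - 1)"
proof -
  assume "j \<ge> 1"
  then have "real j - 1 = real (j - 1) * 1" by simp
  then show ?thesis by (simp only: exp_of_nat_mult)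
qed

lemma t_low:
  assumes y: "0 < y" "y \<le> c / real k" and c: "0 < c" and j: "4 \<le> j"
    and cj: "c * real j \<le> (51/20) * real k"
  shows "real j * real (num_simple j) * y ^ (j - 1) \<le> (c / exp 1)^3 * w j / real k ^ 3"
proof -
  have cjp: "0 < c * real j" using c j by simp
  have kpos: "real k > 0" using cj cjp by linarith
  define e where "e = exp (1::real)"
  have epos: "e > 0" and e27: "(27/10) \<le> e" unfolding e_def using e_bounds by auto
  define r where "r = c * real j / (e * real k)"
  have rnn: "0 \<le> r" unfolding r_def using c kpos epos by simp
  have r1: "r \<le> 19/20"
  proof -
    have "r \<le> (51/20) * real k / (e * real k)" unfolding r_def
      using cj epos kpos by (intro divide_right_mono) auto
    also have "\<dots> = (51/20) / e" using kpos by simp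
    also have "\<dots> \<le> (51/20) / (27/10)" using e27 by (intro divide_left_mono) auto
    finally show ?thesis by simp
  qed
  have A1: "real j * real (num_simple j) * y ^ (j - 1) \<le> real j * fact j * (c / real k) ^ (j - 1)"
    using y num_simple_le_fact_real[of j]
    by (intro mult_mono power_mono mult_left_mono) auto
  have A2: "fact j \<le> real j ^ (j + 1) / e ^ (j - 1)"
  proof -
    have "exp (real j - 1) * fact j \<le> real j ^ (j + 1)" using j by (intro fact_upper) auto
    then have "e ^ (j - 1) * fact j \<le> real j ^ (j + 1)" using exp_nat[of j] j unfolding e_def by simp
    then show ?thesis using epos by (simp add: field_simps)
  qed
  have A3: "real j * fact j * (c / real k) ^ (j - 1) \<le>
      real j * (real j ^ (j + 1) / e ^ (j - 1)) * (c / real k) ^ (j - 1)"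
    using A2 c kpos by (intro mult_right_mono mult_left_mono) auto
  have A4: "real j * (real j ^ (j + 1) / e ^ (j - 1)) * (c / real k) ^ (j - 1) = real j ^ 3 * r ^ (j - 1)"
  proof -
    have p1: "real j ^ (j + 1) = real j ^ 2 * real j ^ (j - 1)"
    proof -
      have "j + 1 = 2 + (j - 1)" using j by simp
      then show ?thesis by (metis power_add)
    qed
    have p2: "r ^ (j - 1) = real j ^ (j - 1) * (c / real k) ^ (j - 1) / e ^ (j - 1)"
      unfolding r_def by (simp add: power_divide power_mult_distrib ac_simps)
    show ?thesis unfolding p1 p2 by (simp add: power2_eq_square power3_eq_cube)
  qed
  have A5: "r ^ (j - 1) \<le> r ^ 3 * (19/20) ^ (j - 4)"
  proof -
    have "j - 1 = 3 + (j - 4)" using j by simp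
    then have "r ^ (j - 1) = r ^ 3 * r ^ (j - 4)" by (metis power_add)
    also have "\<dots> \<le> r ^ 3 * (19/20) ^ (j - 4)"
      using rnn r1 by (intro mult_left_mono power_mono) auto
    finally show ?thesis .
  qed
  have A6: "real j ^ 3 * (r ^ 3 * (19/20) ^ (j - 4)) = (c / e)^3 * w j / real k ^ 3"
    unfolding r_def w_def using kpos epos by (simp add: power_divide power_mult_distrib field_simps)
  have "real j * real (num_simple j) * y ^ (j - 1) \<le> real j ^ 3 * r ^ (j - 1)"
    using A1 A3 A4 by linarith
  also have "\<dots> \<le> real j ^ 3 * (r ^ 3 * (19/20) ^ (j - 4))"
    using A5 by (intro mult_left_mono) auto
  also have "\<dots> = (c / e)^3 * w j / real k ^ 3" by (rule A6)
  finally show ?thesis unfolding e_def .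
qed

lemma iota_bound: "root 3 (real k) \<le> real (iota k) + 1"
proof -
  have "0 \<le> root 3 (real k)" by simp
  then have "real (iota k) = real_of_int \<lfloor>root 3 (real k)\<rfloor>" unfolding iota_def by simp
  then show ?thesis by linarith
qed



lemma main_bound:
  assumes k60: "k \<ge> 60"
    and E2: "(1 + 3 / (2 * real k))^2 * (1 + W / real k ^ 3) < 2"
    and E3: "real k ^ 2 \<le> (11/10) ^ (k - 1)"
    and E4: "real k * (5/6) powr (root 3 (real k)) \<le> 1 / real k ^ 3"
  shows "0 \<le> A k \<and> A k \<le> (2 * W + 1) / real k ^ 3"
proof -
  define y where "y = tau_tilde k"
  define t where "t j = real j * real (num_simple j) * y ^ (j - 1)" for j
  have ypos: "0 < y" and Gy: "G k y = 2" using tau_char[of k] unfolding y_def by auto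
  have kpos: "real k > 0" using k60 by simp
  have Pt: "P k y = sum t {4..k}" unfolding P_def t_def ..
  have tnn: "0 \<le> t j" for j unfolding t_def using ypos by simp
  have P1: "P k y \<le> 1"
  proof -
    have "1 \<le> (1 + y)^2" using ypos by (simp add: one_le_power)
    moreover have "0 \<le> 1 + P k y" using P_nonneg[of y k] ypos by simp
    ultimately have "1 + P k y \<le> (1 + y)^2 * (1 + P k y)"
      by (metis mult_right_mono mult_1 )
    then show ?thesis using Gy unfolding G_def by simp
  qed
  have tle1: "t j \<le> 1" if "j \<in> {4..k}" for j
  proof -
    have "t j \<le> sum t {4..k}" using that tnn by (intro member_le_sum) auto
    then show ?thesis using P1 Pt by simp
  qed
  have yup: "y \<le> 3 / real k"
  proof (rule ccontr)
    assume "\<not> y \<le> 3 / real k"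
    then have yg: "3 / real k < y" by simp
    define m where "m = k - 4"
    have km: "k = m + 4" unfolding m_def using k60 by simp
    have Fn: "fact (k - 4) \<le> num_simple k" using num_simple_lower[of k] k60 by simp
    have "real (fact (k - 4)) \<le> real (num_simple k)" using Fn by (simp only: of_nat_le_iff)
    then have F: "fact m \<le> real (num_simple k)" unfolding m_def by (simp only: of_nat_fact)
    have Fpos: "0 < (fact m :: real)" by simp
    have e1: "real k ^ k \<le> exp 1 ^ (k - 1) * (real k ^ 4 * fact m)"
    proof -
      have "real k ^ k \<le> exp (real k - 1) * fact k" using k60 by (intro fact_lower) auto
      also have "\<dots> = exp 1 ^ (k - 1) * fact k" using exp_nat[of k] k60 by simp
      also have "\<dots> \<le> exp 1 ^ (k - 1) * (real k ^ 4 * fact m)"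
        using fact_le_pow4[of m] unfolding km by (intro mult_left_mono) auto
      finally show ?thesis .
    qed
    have e3: "real k ^ 2 \<le> 3 ^ (k - 1) / exp 1 ^ (k - 1)"
    proof -
      have "11/10 \<le> 3 / exp (1::real)" using e_bounds by (simp add: field_simps)
      then have "(11/10::real) ^ (k - 1) \<le> (3 / exp 1) ^ (k - 1)" by (intro power_mono) auto
      then show ?thesis using E3 by (simp add: power_divide)
    qed
    have low: "1 \<le> real k * fact m * (3 / real k) ^ (k - 1)"
    proof -
      define K where "K = real k"
      define E where "E = exp (1::real) ^ (k - 1)"
      define T where "T = (3::real) ^ (k - 1)"
      define F where "F = (fact m :: real)"
      define Q where "Q = K ^ (k - 1)"
      have Kp: "0 < K" unfolding K_def using kpos .
      have Ep: "0 < E" unfolding E_def by (intro zero_less_power) simp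
      have Fp: "0 < F" unfolding F_def by simp
      have Qp: "0 < Q" unfolding Q_def using Kp by (intro zero_less_power)
      have kk: "K ^ k = K * Q"
      proof -
        obtain k' where "k = Suc k'" using k60 by (cases k) auto
        then show ?thesis unfolding Q_def by simp
      qed
      have s1: "K * Q \<le> E * (K ^ 4 * F)" using e1 unfolding K_def E_def F_def kk[unfolded K_def]
        by (simp add: kk[unfolded K_def Q_def] Q_def)
      have s2: "K ^ 2 * E \<le> T" using e3 Ep unfolding K_def E_def T_def by (simp add: pos_le_divide_eq)
      have s3: "(K ^ 2 * E) * (K ^ 4 * F) \<le> T * (K ^ 4 * F)"
        using s2 Kp Fp by (intro mult_right_mono) auto
      have s4: "K ^ 2 * (K * Q) \<le> K ^ 2 * (E * (K ^ 4 * F))"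
        using s1 by (intro mult_left_mono) auto
      have s5: "K ^ 3 * Q \<le> K ^ 3 * (K * (T * F))"
      proof -
        have "K ^ 3 * Q = K ^ 2 * (K * Q)" by (simp add: power2_eq_square power3_eq_cube)
        also have "\<dots> \<le> K ^ 2 * (E * (K ^ 4 * F))" by (rule s4)
        also have "\<dots> = (K ^ 2 * E) * (K ^ 4 * F)" by (simp add: mult.assoc)
        also have "\<dots> \<le> T * (K ^ 4 * F)" by (rule s3)
        also have "\<dots> = K ^ 3 * (K * (T * F))"
          by (simp add: power3_eq_cube power4_eq_xxxx mult.assoc mult.left_commute)
        finally show ?thesis .
      qed
      have K3: "0 < K ^ 3" using Kp by simp
      have s6: "Q \<le> K * (T * F)" using s5 K3 by (simp add: mult_le_cancel_left_pos)
      have eq: "real k * fact m * (3 / real k) ^ (k - 1) = K * F * T / Q"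
        unfolding K_def F_def T_def Q_def by (simp add: power_divide)
      show ?thesis unfolding eq using s6 Qp by (simp add: pos_le_divide_eq algebra_simps)
    qed
    have "real k * fact m * (3 / real k) ^ (k - 1) < real k * real (num_simple k) * y ^ (k - 1)"
    proof (rule mult_le_less_imp_less)
      show "real k * fact m \<le> real k * real (num_simple k)" using F kpos by simp
      show "(3 / real k) ^ (k - 1) < y ^ (k - 1)" using yg kpos k60
        by (intro power_strict_mono) auto
    qed (use kpos Fpos in auto)
    then have "1 < t k" using low unfolding t_def by linarith
    then show False using tle1[of k] k60 by simp
  qed
  have ylow: "3 / (2 * real k) \<le> y"
  proof (rule ccontr)
    assume "\<not> 3 / (2 * real k) \<le> y"
    then have yl: "y < 3 / (2 * real k)" by simp
    have tj: "t j \<le> w j / real k ^ 3" if "j \<in> {4..k}" for j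
    proof -
      have jk: "real j \<le> real k" using that by simp
      have cj: "3/2 * real j \<le> (51/20) * real k" using jk kpos by linarith
      have yc: "y \<le> (3/2) / real k" using yl by simp
      have "t j \<le> (3 / 2 / exp 1)^3 * w j / real k ^ 3" unfolding t_def
        by (rule t_low[of y "3/2" k j, OF ypos yc _ _ cj]) (use that in auto)
      also have "\<dots> \<le> 1 * w j / real k ^ 3"
      proof -
        have "3/2 \<le> exp (1::real)" using e_bounds by linarith
        then have "3 / 2 / exp (1::real) \<le> 1" by (simp add: divide_le_eq)
        then have "(3 / 2 / exp (1::real))^3 \<le> 1" by (intro power_le_one) auto
        then show ?thesis using w_nonneg[of j] kpos by (intro divide_right_mono mult_right_mono) auto
      qed
      finally show ?thesis by simp
    qed
    have "P k y \<le> sum (\<lambda>j. w j / real k ^ 3) {4..k}" unfolding Pt by (intro sum_mono tj)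
    also have "\<dots> = sum w {4..k} / real k ^ 3" by (simp add: sum_divide_distrib)
    also have "\<dots> \<le> W / real k ^ 3" using sum_w_le[of "{4..k}"] kpos by (intro divide_right_mono) auto
    finally have PW: "P k y \<le> W / real k ^ 3" .
    have "G k y \<le> (1 + 3 / (2 * real k))^2 * (1 + W / real k ^ 3)" unfolding G_def
      using PW yl ypos P_nonneg[of y k] by (intro mult_mono power_mono) auto
    then show False using E2 Gy by linarith
  qed
  have ratio: "t j \<le> 5/6 * t (Suc j)" if j4: "4 \<le> j" and hk: "4 * real k \<le> 5 * (real j - 3)" for j
  proof -
    have s: "real (j - 3) * real (num_simple j) \<le> real (num_simple (Suc j))"
      using num_simple_step[OF that(1)] by (metis of_nat_le_iff of_nat_mult)
    have rj: "real (j - 3) = real j - 3" using that(1) by simp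
    have "6/5 \<le> (real j - 3) * y"
    proof -
      have "6/5 = (4 * real k / 5) * (3 / (2 * real k))" using kpos by simp
      also have "\<dots> \<le> (real j - 3) * y" using that ylow kpos by (intro mult_mono) auto
      finally show ?thesis .
    qed
    then have "t j * (6/5) \<le> t j * ((real j - 3) * y)" using tnn[of j] by (intro mult_left_mono) auto
    also have "\<dots> = real j * ((real j - 3) * real (num_simple j)) * (y ^ (j - 1) * y)"
      unfolding t_def by (simp add: algebra_simps)
    also have "\<dots> \<le> real (Suc j) * real (num_simple (Suc j)) * y ^ j"
    proof -
      have yy: "y ^ (j - 1) * y = y ^ j"
      proof -
        obtain j' where "j = Suc j'" using j4 by (cases j) auto
        then show ?thesis by (simp add: mult.commute)
      qed
      show ?thesis unfolding yy using s rj ypos that(1)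
        by (intro mult_right_mono mult_mono) auto
    qed
    also have "\<dots> = t (Suc j)" unfolding t_def by simp
    finally show ?thesis by linarith
  qed
  have high: "\<forall>j. j + d = k \<longrightarrow> 4 \<le> j \<longrightarrow> 4 * real k \<le> 5 * (real j - 3) \<longrightarrow> t j \<le> (5/6) ^ d" for d
  proof (induction d)
    case 0 then show ?case using tle1 by auto
  next
    case (Suc d)
    show ?case
    proof (intro allI impI)
      fix j assume j: "j + Suc d = k" "4 \<le> j" "4 * real k \<le> 5 * (real j - 3)"
      have "t (Suc j) \<le> (5/6) ^ d" using Suc.IH[rule_format, of "Suc j"] j by auto
      then have "5/6 * t (Suc j) \<le> 5/6 * (5/6) ^ d" by simp
      then show "t j \<le> (5/6) ^ Suc d" using ratio[OF j(2,3)] by simp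
    qed
  qed
  define S where "S = {4..k - iota k - 1}"
  define L where "L = {j. 5 * j < 4 * k + 15}"
  have AS: "A k = sum t S" unfolding A_def S_def t_def y_def ..
  have finS: "finite S" unfolding S_def by simp
  have split: "sum t S = sum t (S \<inter> L) + sum t (S - L)" by (rule sum.Int_Diff[OF finS])
  have lowsum: "sum t (S \<inter> L) \<le> 2 * W / real k ^ 3"
  proof -
    have tj: "t j \<le> 2 * w j / real k ^ 3" if "j \<in> S \<inter> L" for j
    proof -
      have j: "4 \<le> j" "5 * j < 4 * k + 15" using that unfolding S_def L_def by auto
      have "real (5 * j) < real (4 * k + 15)" using j(2) by (simp only: of_nat_less_iff)
      then have "5 * real j < 4 * real k + 15" by simp
      moreover have "60 \<le> real k" using k60 by simp
      ultimately have "3 * real j \<le> (51/20) * real k" by linarith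
      then have "t j \<le> (3 / exp 1)^3 * w j / real k ^ 3" unfolding t_def
        using ypos yup j by (intro t_low) auto
      also have "\<dots> \<le> 2 * w j / real k ^ 3"
      proof -
        have "3 / exp (1::real) \<le> 3 / (27/10)" using e_bounds by (intro divide_left_mono) auto
        then have "(3 / exp (1::real))^3 \<le> (3 / (27/10))^3" by (intro power_mono) auto
        also have "\<dots> \<le> 2" by (simp add: power3_eq_cube)
        finally show ?thesis using w_nonneg[of j] kpos by (intro divide_right_mono mult_right_mono) auto
      qed
      finally show ?thesis .
    qed
    have "sum t (S \<inter> L) \<le> sum (\<lambda>j. 2 * w j / real k ^ 3) (S \<inter> L)" by (intro sum_mono tj)
    also have "\<dots> = 2 * sum w (S \<inter> L) / real k ^ 3" by (simp add: sum_divide_distrib sum_distrib_left)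
    also have "\<dots> \<le> 2 * W / real k ^ 3" using sum_w_le[of "S \<inter> L"] finS kpos
      by (intro divide_right_mono) auto
    finally show ?thesis .
  qed
  have highsum: "sum t (S - L) \<le> 1 / real k ^ 3"
  proof -
    define B where "B = (5/6::real) powr (root 3 (real k))"
    have tj: "t j \<le> B" if "j \<in> S - L" for j
    proof -
      have j: "4 \<le> j" "j \<le> k - iota k - 1" "4 * k + 15 \<le> 5 * j" using that unfolding S_def L_def by auto
      have jk: "j \<le> k" using j(2) by simp
      have hr: "4 * real k \<le> 5 * (real j - 3)"
      proof -
        have "real (4 * k + 15) \<le> real (5 * j)" using j(3) by (simp only: of_nat_le_iff)
        then show ?thesis by simp
      qed
      have "t j \<le> (5/6) ^ (k - j)" using high[of "k - j"] jk j(1) hr by auto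
      also have "\<dots> \<le> (5/6) ^ (iota k + 1)"
      proof -
        have dj: "iota k + 1 \<le> k - j" using j(1,2) by arith
        show ?thesis using dj by (intro power_decreasing) auto
      qed
      also have "\<dots> = (5/6) powr real (iota k + 1)" by (rule powr_realpow[symmetric]) simp
      also have "\<dots> \<le> B" unfolding B_def using iota_bound[of k] by (intro powr_mono') auto
      finally show ?thesis .
    qed
    have "sum t (S - L) \<le> real (card (S - L)) * B" by (rule sum_bounded_above) (erule tj)
    also have "\<dots> \<le> real k * B"
    proof -
      have "card (S - L) \<le> card S" using finS by (intro card_mono) auto
      also have "card S \<le> k" unfolding S_def by simp
      finally show ?thesis unfolding B_def by (intro mult_right_mono) auto
    qed
    also have "\<dots> \<le> 1 / real k ^ 3" using E4 unfolding B_def .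
    finally show ?thesis .
  qed
  have "0 \<le> A k" unfolding AS using tnn by (intro sum_nonneg) auto
  moreover have "A k \<le> (2 * W + 1) / real k ^ 3"
  proof -
    have "(2 * W + 1) / real k ^ 3 = 2 * W / real k ^ 3 + 1 / real k ^ 3" by (simp add: add_divide_distrib)
    then show ?thesis unfolding AS split using lowsum highsum by linarith
  qed
  ultimately show ?thesis ..
qed

theorem lemma5p3:
  shows "A \<in> O[at_top](\<lambda>k. real k powr (-3))"
proof -
  have ev: "eventually (\<lambda>k. k \<ge> 60 \<and> (1 + 3 / (2 * real k))^2 * (1 + W / real k ^ 3) < 2
      \<and> real k ^ 2 \<le> (11/10) ^ (k - 1)
      \<and> real k * (5/6) powr (root 3 (real k)) \<le> 1 / real k ^ 3) at_top"
    by (intro eventually_conj eventually_ge_at_top; real_asymp)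
  show ?thesis
  proof (rule bigoI[of _ "2 * W + 1"])
    show "eventually (\<lambda>k. norm (A k) \<le> (2 * W + 1) * norm (real k powr (-3))) at_top"
      using ev
    proof eventually_elim
      case (elim k)
      then have b: "0 \<le> A k \<and> A k \<le> (2 * W + 1) / real k ^ 3" by (intro main_bound) auto
      have kpos: "real k > 0" using elim by simp
      have "real k powr (-3) = 1 / real k ^ 3" using kpos by (simp add: powr_minus_divide)
      then have n1: "norm (real k powr (-3)) = 1 / real k ^ 3" by simp
      have n2: "norm (A k) = A k" using b by simp
      have "(2 * W + 1) / real k ^ 3 = (2 * W + 1) * (1 / real k ^ 3)" by simp
      then show ?case unfolding n1 n2 using b by linarith
    qed
  qed
qed

end
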